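(* Suppose $U_1,\dots,U_N,V_1,\dots,V_n\in\mathbb{R}^d$ form a margin-$m$, relative-bias-$0$ embedding of $S_{n,k}$ with $0<m<1$. Then for every $T\subset[n]$ with $\max\bigl\{1,\,k-\frac{2m(n-k)}{1-m}\bigr\}\le|T|\le k$ there exist $h\in\mathbb{S}^{d-1}$ and $c\in\mathbb{R}$ such that $\langle h,V_i\rangle\ge c$ for all $i\in T$ and $\langle h,V_j\rangle\le c$ for all $j\notin T$.
   Context: $S_{n,k}\in\{0,1\}^{\binom{n}{k}\times n}$ (so $N=\binom nk$) is the matrix whose rows are all the distinct vectors in $\{0,1\}^n$ with exactly $k$ ones, each appearing exactly once. For $A\in\{0,1\}^{N\times n}$ and $m\ge0$, unit vectors $U_1,\dots,U_N,V_1,\dots,V_n\in\mathbb{R}^d$ form a margin-$m$, relative-bias-$0$ embedding of $A$ if $\langle U_j,V_i\rangle\ge m$ whenever $A_{ji}=1$ and $\langle U_j,V_i\rangle\le -m$ whenever $A_{ji}=0$. *)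

theory Defs
  imports "HOL-Analysis.Analysis"
begin

text \<open>A 0/1 matrix with rows indexed by a row set R and columns indexed by {..<n}
  is given as a predicate A :: 'r => nat => bool (A r i means entry (r,i) equals 1).\<close>

definition margin_embedding ::
  "'r set \<Rightarrow> nat \<Rightarrow> ('r \<Rightarrow> nat \<Rightarrow> bool) \<Rightarrow> ('r \<Rightarrow> 'a::euclidean_space) \<Rightarrow> (nat \<Rightarrow> 'a) \<Rightarrow> real \<Rightarrow> bool"
  where "margin_embedding R n A U V m \<longleftrightarrow>
     (\<forall>r\<in>R. norm (U r) = 1) \<and> (\<forall>i<n. norm (V i) = 1) \<and>
     (\<forall>r\<in>R. \<forall>i<n. (A r i \<longrightarrow> U r \<bullet> V i \<ge> m) \<and> (\<not> A r i \<longrightarrow> U r \<bullet> V i \<le> - m))"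

text \<open>The matrix S_{n,k}: its rows are exactly the distinct 0/1 vectors of length n with
  exactly k ones, i.e. (indexing each row by its support) the k-subsets of {..<n}.\<close>

definition Snk_rows :: "nat \<Rightarrow> nat \<Rightarrow> nat set set"
  where "Snk_rows n k = {S. S \<subseteq> {..<n} \<and> card S = k}"

definition Snk :: "nat set \<Rightarrow> nat \<Rightarrow> bool"
  where "Snk S i \<longleftrightarrow> i \<in> S"

end

theory Submission
  imports Defs
begin

lemma binid: "(a choose Suc b) * Suc b = (a choose b) * (a - b)"
proof (cases "a \<le> b")
  case True
  then show ?thesis by simp
next
  case False
  have e1: "(Suc a - Suc b) * (Suc a choose Suc b) = Suc a * (a choose Suc b)"
    using binomial_absorb_comp[of "Suc a" "Suc b"] by simp
  have e2: "Suc a * (a choose b) = (Suc a choose Suc b) * Suc b"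
    using Suc_times_binomial_eq by blast
  have e1': "(a - b) * (Suc a choose Suc b) = Suc a * (a choose Suc b)" using e1 by (simp del: mult_Suc)
  have "Suc a * ((a choose Suc b) * Suc b) = (Suc a * (a choose Suc b)) * Suc b"
    by (simp only: mult.assoc)
  also have "\<dots> = ((a - b) * (Suc a choose Suc b)) * Suc b" by (simp only: e1')
  also have "\<dots> = (a - b) * ((Suc a choose Suc b) * Suc b)" by (simp only: mult.assoc)
  also have "\<dots> = (a - b) * (Suc a * (a choose b))" by (simp only: e2)
  also have "\<dots> = Suc a * ((a choose b) * (a - b))" by (simp only: mult_ac)
  finally have "Suc a * ((a choose Suc b) * Suc b) = Suc a * ((a choose b) * (a - b))" .
  then show ?thesis by (metis mult_left_cancel nat.simps(3))
qed

lemma card_supersets: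
  assumes fX: "finite X" and BX: "B \<subseteq> X"
  shows "card {S. S \<subseteq> X \<and> card S = k \<and> B \<subseteq> S} =
    (if card B \<le> k then (card X - card B) choose (k - card B) else 0)"
proof (cases "card B \<le> k")
  case False
  have fB: "finite B" using fX BX finite_subset by blast
  have E: "{S. S \<subseteq> X \<and> card S = k \<and> B \<subseteq> S} = {}"
  proof (rule ccontr)
    assume "{S. S \<subseteq> X \<and> card S = k \<and> B \<subseteq> S} \<noteq> {}"
    then obtain S where "S \<subseteq> X" "card S = k" "B \<subseteq> S" by blast
    then have "card B \<le> k" using card_mono[of S B] fX finite_subset by blast
    then show False using False by simp
  qed
  show ?thesis using False by (simp only: E card.empty if_False)
next
  case True
  have fB: "finite B" using fX BX finite_subset by blast
  have img: "{S. S \<subseteq> X \<and> card S = k \<and> B \<subseteq> S} =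
      (\<lambda>A. A \<union> B) ` {A. A \<subseteq> X - B \<and> card A = k - card B}"
  proof (intro set_eqI iffI)
    fix S assume "S \<in> {S. S \<subseteq> X \<and> card S = k \<and> B \<subseteq> S}"
    then have S: "S \<subseteq> X" "card S = k" "B \<subseteq> S" by auto
    have fS: "finite S" using S fX finite_subset by blast
    have "card (S - B) = k - card B" using S fS fB card_Diff_subset by auto
    moreover have "S = (S - B) \<union> B" using S by auto
    ultimately show "S \<in> (\<lambda>A. A \<union> B) ` {A. A \<subseteq> X - B \<and> card A = k - card B}"
      using S by blast
  next
    fix S assume "S \<in> (\<lambda>A. A \<union> B) ` {A. A \<subseteq> X - B \<and> card A = k - card B}"
    then obtain A where A: "A \<subseteq> X - B" "card A = k - card B" "S = A \<union> B" by blast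
    have fA: "finite A" using A fX finite_subset by blast
    have "card S = card A + card B" using A fA fB card_Un_disjoint by blast
    then show "S \<in> {S. S \<subseteq> X \<and> card S = k \<and> B \<subseteq> S}" using A True BX by auto
  qed
  have inj: "inj_on (\<lambda>A. A \<union> B) {A. A \<subseteq> X - B \<and> card A = k - card B}"
    by (rule inj_onI) blast
  have "card {S. S \<subseteq> X \<and> card S = k \<and> B \<subseteq> S} = card {A. A \<subseteq> X - B \<and> card A = k - card B}"
    unfolding img by (rule card_image[OF inj])
  also have "\<dots> = card (X - B) choose (k - card B)"
    by (rule n_subsets) (use fX in blast)
  also have "card (X - B) = card X - card B" using card_Diff_subset fB BX by blast
  finally show ?thesis using True by simp
qed

theorem propositionG2:
  fixes n k :: nat and m :: real
    and U :: "nat set \<Rightarrow> 'a::euclidean_space" and V :: "nat \<Rightarrow> 'a"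
  assumes emb: "margin_embedding (Snk_rows n k) n Snk U V m"
    and m_pos: "0 < m" and m_lt1: "m < 1"
    and T_sub: "T \<subseteq> {..<n}"
    and T_lo: "max 1 (real k - 2 * m * (real n - real k) / (1 - m)) \<le> real (card T)"
    and T_hi: "card T \<le> k"
  shows "\<exists>h c. norm h = 1 \<and> (\<forall>i\<in>T. h \<bullet> V i \<ge> c) \<and> (\<forall>j\<in>{..<n} - T. h \<bullet> V j \<le> c)"
proof -
  define R where "R = Snk_rows n k"
  define t where "t = card T"
  have nU: "\<And>S. S \<in> R \<Longrightarrow> norm (U S) = 1" using emb unfolding margin_embedding_def R_def by blast
  have nV: "\<And>i. i < n \<Longrightarrow> norm (V i) = 1" using emb unfolding margin_embedding_def by blast
  have pos: "\<And>S i. S \<in> R \<Longrightarrow> i < n \<Longrightarrow> i \<in> S \<Longrightarrow> U S \<bullet> V i \<ge> m"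
    using emb unfolding margin_embedding_def R_def Snk_def by blast
  have neg: "\<And>S i. S \<in> R \<Longrightarrow> i < n \<Longrightarrow> i \<notin> S \<Longrightarrow> U S \<bullet> V i \<le> - m"
    using emb unfolding margin_embedding_def R_def Snk_def by blast
  have up: "\<And>S i. S \<in> R \<Longrightarrow> i < n \<Longrightarrow> U S \<bullet> V i \<le> 1"
  proof -
    fix S i assume "S \<in> R" "i < n"
    then have "\<bar>U S \<bullet> V i\<bar> \<le> norm (U S) * norm (V i)" by (rule_tac Cauchy_Schwarz_ineq2)
    then show "U S \<bullet> V i \<le> 1" using nU nV \<open>S \<in> R\<close> \<open>i < n\<close> by simp
  qed
  have fT: "finite T" using T_sub finite_subset by blast
  have tn: "t \<le> n" unfolding t_def using card_mono[OF _ T_sub] by simp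
  have t1: "1 \<le> t" using T_lo unfolding t_def by simp
  have tlo: "real k - 2 * m * (real n - real k) / (1 - m) \<le> real t" using T_lo unfolding t_def by simp
  have tk: "t \<le> k" using T_hi t_def by simp
  have key: "(real k - real t) * (1 - m) \<le> 2 * m * (real n - real k)"
  proof -
    have "real k - real t \<le> 2 * m * (real n - real k) / (1 - m)" using tlo by simp
    then have "(real k - real t) * (1 - m) \<le> 2 * m * (real n - real k) / (1 - m) * (1 - m)"
      using m_lt1 by (intro mult_right_mono) auto
    also have "\<dots> = 2 * m * (real n - real k)" using m_lt1 by simp
    finally show ?thesis .
  qed
  have kn: "k \<le> n"
  proof (rule ccontr)
    assume "\<not> k \<le> n"
    then have "2 * m * (real n - real k) < 0" using m_pos by (simp add: mult_pos_neg)
    moreover have "(real k - real t) * (1 - m) \<ge> 0" using tk m_lt1 by simp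
    ultimately show False using key by linarith
  qed
  show ?thesis
  proof (cases "k = n")
    case True
    have "real t \<ge> real k"
    proof (rule ccontr)
      assume "\<not> real t \<ge> real k"
      then have "(real k - real t) * (1 - m) > 0" using m_lt1 by simp
      then show False using key True by simp
    qed
    then have "card T = card {..<n}" using tn True t_def by simp
    then have Teq: "T = {..<n}" using card_subset_eq[OF _ T_sub] by simp
    obtain b :: 'a where b: "b \<in> Basis" using nonempty_Basis by blast
    have nb: "norm b = 1" using b by simp
    have "\<forall>i\<in>T. b \<bullet> V i \<ge> -1"
    proof
      fix i assume "i \<in> T"
      then have "i < n" using T_sub by auto
      have "\<bar>b \<bullet> V i\<bar> \<le> norm b * norm (V i)" by (rule Cauchy_Schwarz_ineq2)
      then show "b \<bullet> V i \<ge> -1" using nb nV \<open>i < n\<close> by simp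
    qed
    then show ?thesis using nb Teq by blast
  next
    case False
    then have kn': "k < n" using kn by simp
    define F where "F = {S. S \<subseteq> {..<n} \<and> card S = k \<and> T \<subseteq> S}"
    have FR: "F \<subseteq> R" unfolding F_def R_def Snk_rows_def by blast
    have fF: "finite F" unfolding F_def by (rule finite_subset[of _ "Pow {..<n}"]) auto
    have cF: "card F = (n - t) choose (k - t)"
      unfolding F_def using card_supersets[OF _ T_sub, of k] tk t_def by simp
    have cFpos: "card F > 0" unfolding cF using tk kn by simp
    define h' where "h' = (\<Sum>S\<in>F. U S)"
    define c' where "c' = m * real (card F)"
    have c'pos: "c' > 0" unfolding c'_def using m_pos cFpos by simp
    have hi: "h' \<bullet> V i \<ge> c'" if "i \<in> T" for i
    proof -
      have "h' \<bullet> V i = (\<Sum>S\<in>F. U S \<bullet> V i)" unfolding h'_def by (rule inner_sum_left)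
      also have "\<dots> \<ge> (\<Sum>S\<in>F. m)"
      proof (rule sum_mono)
        fix S assume "S \<in> F"
        then show "m \<le> U S \<bullet> V i" using pos[of S i] FR that T_sub unfolding F_def by auto
      qed
      finally show ?thesis unfolding c'_def by (simp add: mult.commute)
    qed
    have hj: "h' \<bullet> V j \<le> c'" if "j \<in> {..<n} - T" for j
    proof -
      have jn: "j < n" and jT: "j \<notin> T" using that by auto
      define F1 where "F1 = {S. S \<subseteq> {..<n} \<and> card S = k \<and> insert j T \<subseteq> S}"
      define F0 where "F0 = {S. S \<subseteq> {..<n} - {j} \<and> card S = k \<and> T \<subseteq> S}"
      have FU: "F = F1 \<union> F0" unfolding F_def F1_def F0_def by blast
      have Fdisj: "F1 \<inter> F0 = {}" unfolding F1_def F0_def by blast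
      have fF1: "finite F1" and fF0: "finite F0" using fF FU by auto
      have F1R: "F1 \<subseteq> R" and F0R: "F0 \<subseteq> R" using FR FU by auto
      have cFs: "card F = card F1 + card F0" using FU Fdisj fF1 fF0 card_Un_disjoint by blast
      have ct1: "card (insert j T) = Suc t" using jT fT t_def by simp
      have cF1: "card F1 = (if Suc t \<le> k then (n - Suc t) choose (k - Suc t) else 0)"
        unfolding F1_def using card_supersets[of "{..<n}" "insert j T" k] T_sub jn ct1 by simp
      have cn1: "card ({..<n} - {j}) = n - 1" using jn by simp
      have cF0: "card F0 = (n - 1 - t) choose (k - t)"
        unfolding F0_def using card_supersets[of "{..<n} - {j}" T k] T_sub jT cn1 tk t_def by auto
      have ineq: "real (card F1) * (1 - m) \<le> 2 * m * real (card F0)"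
      proof (cases "Suc t \<le> k")
        case False
        then show ?thesis using cF1 m_pos by simp
      next
        case True
        define a where "a = n - 1 - t"
        define b where "b = k - Suc t"
        have kt: "k - t = Suc b" using True b_def by simp
        have F1e: "card F1 = a choose b" using cF1 True a_def b_def by simp
        have F0e: "card F0 = a choose Suc b" using cF0 kt a_def by simp
        have ab: "a - b = n - k" using a_def b_def True kn' by simp
        have ne: "card F0 * Suc b = card F1 * (n - k)" using binid[of a b] F1e F0e ab by simp
        have "real (card F0 * Suc b) = real (card F1 * (n - k))" using ne by (simp only:)
        then have e2: "real (card F0) * real (Suc b) = real (card F1) * real (n - k)"
          by (simp only: of_nat_mult)
        have e3: "real (Suc b) = real k - real t" using tk by (simp only: kt[symmetric] of_nat_diff)
        have e4: "real (n - k) = real n - real k" using kn' by (simp only: of_nat_diff less_imp_le)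
        have "real (card F0) * (real k - real t) = real (card F1) * (real n - real k)"
          using e2 unfolding e3 e4 .
        then have E: "real (card F1) * (real n - real k) = real (card F0) * (real k - real t)" by simp
        have "real (card F1) * (1 - m) * (real n - real k)
            = (real (card F1) * (real n - real k)) * (1 - m)" by (simp only: mult_ac)
        also have "\<dots> = (real (card F0) * (real k - real t)) * (1 - m)" by (simp only: E)
        also have "\<dots> = real (card F0) * ((real k - real t) * (1 - m))" by (simp only: mult_ac)
        also have "\<dots> \<le> real (card F0) * (2 * m * (real n - real k))"
          using key by (intro mult_left_mono) auto
        finally have "real (card F1) * (1 - m) * (real n - real k)
            \<le> 2 * m * real (card F0) * (real n - real k)" by (simp add: algebra_simps)
        moreover have "real n - real k > 0" using kn' by simp
        ultimately show ?thesis by simp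
      qed
      have "h' \<bullet> V j = (\<Sum>S\<in>F1. U S \<bullet> V j) + (\<Sum>S\<in>F0. U S \<bullet> V j)"
        unfolding h'_def inner_sum_left FU using sum.union_disjoint[OF fF1 fF0 Fdisj] by simp
      also have "\<dots> \<le> (\<Sum>S\<in>F1. 1) + (\<Sum>S\<in>F0. - m)"
      proof (rule add_mono; rule sum_mono)
        fix S assume "S \<in> F1"
        then show "U S \<bullet> V j \<le> 1" using up F1R jn by auto
      next
        fix S assume "S \<in> F0"
        then have "S \<in> R" "j \<notin> S" using F0R unfolding F0_def by auto
        then show "U S \<bullet> V j \<le> - m" using neg jn by auto
      qed
      also have "\<dots> = real (card F1) - m * real (card F0)" by simp
      also have "\<dots> \<le> c'" unfolding c'_def cFs using ineq by (simp add: algebra_simps)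
      finally show ?thesis .
    qed
    obtain i0 where i0: "i0 \<in> T" using t1 t_def by (metis card.empty not_one_le_zero ex_in_conv)
    have hnz: "h' \<noteq> 0" using hi[OF i0] c'pos by auto
    have nh: "norm h' > 0" using hnz by simp
    define h where "h = (1 / norm h') *\<^sub>R h'"
    define c where "c = c' / norm h'"
    have hn: "norm h = 1" unfolding h_def using nh by simp
    have hV: "h \<bullet> V i = (h' \<bullet> V i) / norm h'" for i unfolding h_def by simp
    have "\<forall>i\<in>T. h \<bullet> V i \<ge> c" unfolding hV c_def using hi nh by (simp add: divide_right_mono)
    moreover have "\<forall>j\<in>{..<n} - T. h \<bullet> V j \<le> c" unfolding hV c_def using hj nh
      by (simp add: divide_right_mono)
    ultimately show ?thesis using hn by blast
  qed
qed

end
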